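(* Let $X$ be a real Banach space, $h:X\to\mathbb R\cup\{+\infty\}$ proper and lower semicontinuous, $\bar x$ a global minimizer of $h$, and $p,q\in(1,\infty)$ with $p^{-1}+q^{-1}=1$. If $x\in X$ and $\xi\in X^*$ satisfy $x\in\operatorname{argmin}_{y\in X}\{\sqrt[p]{h(y)-h(\bar x)}-\langle\xi,y\rangle\}$, then $$x\in\operatorname{argmin}_{y\in X}\Big\{h(y)-p\sqrt[q]{h(x)-h(\bar x)}\,\langle\xi,y\rangle\Big\}.$$
   Context: Here $\sqrt[p]{+\infty}=+\infty$. *)

theory Defs
  imports "HOL-Analysis.Analysis" "HOL-Library.Extended_Real"
begin

definition lsc_fun :: "('a::topological_space \<Rightarrow> ereal) \<Rightarrow> bool" where
  "lsc_fun h \<longleftrightarrow> (\<forall>x. h x \<le> Liminf (at x) h)"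

definition proper_fun :: "('a \<Rightarrow> ereal) \<Rightarrow> bool" where
  "proper_fun h \<longleftrightarrow> (\<forall>x. h x \<noteq> -\<infinity>) \<and> (\<exists>x. h x \<noteq> \<infinity>)"

definition argmin_set :: "('a \<Rightarrow> ereal) \<Rightarrow> 'a set" where
  "argmin_set f = {x. \<forall>y. f x \<le> f y}"

text \<open>p-th root on [0, +infinity], with root of +infinity = +infinity
  (only used on nonnegative arguments).\<close>
definition eroot :: "real \<Rightarrow> ereal \<Rightarrow> ereal" where
  "eroot p t = (if t = \<infinity> then \<infinity> else ereal (real_of_ereal t powr (1 / p)))"

end

theory Submission
  imports Defs
begin

lemma key_real:
  fixes p q u v s :: real
  assumes "1 < p" "1 < q" "1 / p + 1 / q = 1" "0 \<le> u" "0 \<le> v"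
    and "s \<le> v powr (1/p) - u powr (1/p)"
  shows "p * (u powr (1/q)) * s \<le> v - u"
proof -
  define b where "b = v powr (1/p)"
  define c where "c = u powr (1/q)"
  have c0: "0 \<le> c" unfolding c_def by simp
  have b0: "0 \<le> b" unfolding b_def by simp
  have Y: "b * c \<le> b powr p / p + c powr q / q"
    using Youngs_inequality[OF assms(1,2,3) b0 c0] .
  have bp: "b powr p = v" unfolding b_def using assms(1,5) by (simp add: powr_powr)
  have cq: "c powr q = u" unfolding c_def using assms(2,4) by (simp add: powr_powr)
  have ac: "u powr (1/p) * c = u"
    unfolding c_def using assms(3,4) by (simp add: powr_add[symmetric])
  have "p * c * s \<le> p * c * (b - u powr (1/p))"
    using assms(1,6) c0 unfolding b_def by (intro mult_left_mono) auto
  also have "\<dots> = p * (b * c) - p * u" using ac by (simp add: algebra_simps)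
  also have "\<dots> \<le> p * (v / p + u / q) - p * u"
    using Y bp cq assms(1) by simp
  also have "\<dots> = v + (p / q - p) * u" using assms(1) by (simp add: algebra_simps)
  also have "p / q - p = -1"
  proof -
    have "p / q = p * (1/q)" by simp
    also have "\<dots> = p * (1 - 1/p)" proof -
      have "1/q = 1 - 1/p" using assms(3) by linarith
      then show ?thesis by simp
    qed
    also have "\<dots> = p - 1" using assms(1) by (simp add: algebra_simps)
    finally show ?thesis by simp
  qed
  finally show ?thesis unfolding c_def by simp
qed

theorem lemma2p4:
  fixes h :: "'a::banach \<Rightarrow> ereal"
    and xbar x :: 'a
    and \<xi> :: "'a \<Rightarrow> real"
    and p q :: real
  assumes "proper_fun h"
    and "lsc_fun h"
    and "\<forall>y. h xbar \<le> h y"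
    and "1 < p" and "1 < q" and "1 / p + 1 / q = 1"
    and "bounded_linear \<xi>"
    and "x \<in> argmin_set (\<lambda>y. eroot p (h y - h xbar) - ereal (\<xi> y))"
  shows "x \<in> argmin_set (\<lambda>y. h y - ereal p * eroot q (h x - h xbar) * ereal (\<xi> y))"
proof -
  obtain z where z: "h z \<noteq> \<infinity>" using assms(1) unfolding proper_fun_def by blast
  have hnm: "\<And>y. h y \<noteq> -\<infinity>" using assms(1) unfolding proper_fun_def by blast
  obtain m where m: "h xbar = ereal m"
    using hnm[of xbar] assms(3) z by (cases "h xbar") auto
  have ge: "\<And>y. ereal m \<le> h y" using assms(3) m by simp
  have A: "\<And>y. eroot p (h x - ereal m) - ereal (\<xi> x) \<le> eroot p (h y - ereal m) - ereal (\<xi> y)"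
    using assms(8) m unfolding argmin_set_def by auto
  obtain hz where hz: "h z = ereal hz" using z hnm[of z] by (cases "h z") auto
  have "eroot p (h x - ereal m) \<noteq> \<infinity>"
  proof
    assume "eroot p (h x - ereal m) = \<infinity>"
    with A[of z] hz show False by (simp add: eroot_def)
  qed
  then have "h x \<noteq> \<infinity>" by (auto simp: eroot_def)
  then obtain hx where hx: "h x = ereal hx" using hnm[of x] by (cases "h x") auto
  define u where "u = hx - m"
  have u0: "0 \<le> u" using ge[of x] hx u_def by simp
  show ?thesis unfolding argmin_set_def
  proof (intro CollectI allI)
    fix y
    show "h x - ereal p * eroot q (h x - h xbar) * ereal (\<xi> x)
          \<le> h y - ereal p * eroot q (h x - h xbar) * ereal (\<xi> y)"
    proof (cases "h y = \<infinity>")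
      case True
      then show ?thesis using hx m by (simp add: eroot_def)
    next
      case False
      then obtain hy where hy: "h y = ereal hy" using hnm[of y] by (cases "h y") auto
      define v where "v = hy - m"
      have v0: "0 \<le> v" using ge[of y] hy v_def by simp
      have "u powr (1/p) - \<xi> x \<le> v powr (1/p) - \<xi> y"
        using A[of y] hx hy u_def v_def by (simp add: eroot_def)
      then have "p * (u powr (1/q)) * (\<xi> y - \<xi> x) \<le> v - u"
        by (intro key_real[OF assms(4,5,6) u0 v0]) simp
      then have "hx - p * (u powr (1/q)) * \<xi> x \<le> hy - p * (u powr (1/q)) * \<xi> y"
        unfolding v_def u_def by (simp add: algebra_simps)
      then show ?thesis using hx hy m by (simp add: eroot_def u_def)
    qed
  qed
qed

end
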